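(* Let $R$ be a $*$-reducing ring, let $p,q\in R$ be projections, and put $\overline{p}=1-p$, $\overline{q}=1-q$. Then the following are equivalent: (1) $p+q-pq$ is MP invertible; (2) $p+\overline{p}q\overline{p}$ is MP invertible; (3) $\overline{p}q\overline{p}$ is MP invertible; (4) $q-pq$ is MP invertible; (5) $q-qp$ is MP invertible; (6) $p+q-qp$ is MP invertible; (7) $q+\overline{q}p\overline{q}$ is MP invertible; (8) $\overline{q}p\overline{q}$ is MP invertible; (9) $p-qp$ is MP invertible; (10) $p-pq$ is MP invertible.
   Context: $R$ is an associative ring with identity $1$ and an involution $a\mapsto a^*$ (satisfying $(a^* )^*=a$, $(a+b)^*=a^*+b^*$, $(ab)^*=b^*a^*$). $R$ is $*$-reducing if $a^*a=0$ implies $a=0$ for all $a\in R$. An element $a$ is MP invertible if there is $b$ with $aba=a$, $bab=b$, $(ab)^*=ab$, $(ba)^*=ba$; this $b$ is unique and written $a^{\dagger}$. A projection is an element $p$ with $p^2=p=p^*$. *)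

theory Defs
  imports Main
begin

definition is_involution :: "('a::ring_1 \<Rightarrow> 'a) \<Rightarrow> bool" where
  "is_involution s \<longleftrightarrow> (\<forall>a. s (s a) = a) \<and> (\<forall>a b. s (a + b) = s a + s b)
     \<and> (\<forall>a b. s (a * b) = s b * s a)"

definition star_reducing :: "('a::ring_1 \<Rightarrow> 'a) \<Rightarrow> bool" where
  "star_reducing s \<longleftrightarrow> (\<forall>a. s a * a = 0 \<longrightarrow> a = 0)"

definition MP_inverse :: "('a::ring_1 \<Rightarrow> 'a) \<Rightarrow> 'a \<Rightarrow> 'a \<Rightarrow> bool" where
  "MP_inverse s a b \<longleftrightarrow> a * b * a = a \<and> b * a * b = b \<and> s (a * b) = a * b \<and> s (b * a) = b * a"

definition MP_invertible :: "('a::ring_1 \<Rightarrow> 'a) \<Rightarrow> 'a \<Rightarrow> bool" where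
  "MP_invertible s a \<longleftrightarrow> (\<exists>b. MP_inverse s a b)"

definition projection :: "('a::ring_1 \<Rightarrow> 'a) \<Rightarrow> 'a \<Rightarrow> bool" where
  "projection s p \<longleftrightarrow> p * p = p \<and> s p = p"

end

theory Submission
  imports Defs
begin

context
  fixes s :: "'a::ring_1 \<Rightarrow> 'a"
  assumes inv: "is_involution s"
begin

lemma ss[simp]: "s (s a) = a" using inv unfolding is_involution_def by (elim conjE allE)
lemma sadd[simp]: "s (a + b) = s a + s b" using inv unfolding is_involution_def by (elim conjE allE)
lemma smult[simp]: "s (a * b) = s b * s a" using inv unfolding is_involution_def by (elim conjE allE)
lemma s0[simp]: "s 0 = 0"
proof -
  have "s (0 + 0) = s 0 + s 0" by (rule sadd)
  thus ?thesis by simp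
qed
lemma sminus[simp]: "s (- a) = - s a"
proof -
  have "s a + s (- a) = s (a + - a)" by (simp only: sadd)
  also have "\<dots> = 0" by simp
  finally have "s a + s (- a) = 0" .
  from minus_unique[OF this] show ?thesis by simp
qed
lemma sdiff[simp]: "s (a - b) = s a - s b"
  by (simp only: diff_conv_add_uminus sadd sminus)
lemma s1[simp]: "s 1 = 1"
proof -
  have "s (s 1 * 1) = s 1 * s (s 1)" by (rule smult)
  thus ?thesis by simp
qed
lemma MP_unique:
  assumes "MP_inverse s a b" "MP_inverse s a c" shows "b = c"
proof -
  have b1: "a*b*a = a" "b*a*b = b" "s (a*b) = a*b" "s (b*a) = b*a"
    and c1: "a*c*a = a" "c*a*c = c" "s (a*c) = a*c" "s (c*a) = c*a"
    using assms unfolding MP_inverse_def by auto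
  have AB: "s b * s a = a*b" using b1(3) by simp
  have AC: "s c * s a = a*c" using c1(3) by simp
  have BA: "s a * s b = b*a" using b1(4) by simp
  have CA: "s a * s c = c*a" using c1(4) by simp
  have sa: "s a = s a * s c * s a"
  proof -
    have "s a = s (a*c*a)" using c1(1) by simp
    also have "\<dots> = s a * s c * s a" by (simp add: mult.assoc)
    finally show ?thesis .
  qed
  have sa2: "s a = s a * s b * s a"
  proof -
    have "s a = s (a*b*a)" using b1(1) by simp
    also have "\<dots> = s a * s b * s a" by (simp add: mult.assoc)
    finally show ?thesis .
  qed
  have "b = b*(a*b)" using b1 by (simp add: mult.assoc)
  also have "\<dots> = b*(s b * s a)" using AB by simp
  also have "\<dots> = b*(s b * (s a * s c * s a))" by (simp only: sa[symmetric])
  also have "\<dots> = b*(s b * s a) * (s c * s a)" by (simp add: mult.assoc)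
  also have "\<dots> = b*(a*b)*(a*c)" using AB AC by simp
  also have "\<dots> = (b*a*b)*a*c" by (simp add: mult.assoc)
  also have "\<dots> = b*a*c" using b1(2) by simp
  finally have B: "b = b*a*c" .
  have "c = (c*a)*c" using c1 by (simp add: mult.assoc)
  also have "\<dots> = s a * s c * c" using CA by simp
  also have "\<dots> = (s a * s b * s a) * s c * c" by (simp only: sa2[symmetric])
  also have "\<dots> = (s a * s b) * (s a * s c) * c" by (simp add: mult.assoc)
  also have "\<dots> = (b*a)*(c*a)*c" using BA CA by simp
  also have "\<dots> = b*a*(c*a*c)" by (simp add: mult.assoc)
  also have "\<dots> = b*a*c" using c1(2) by simp
  finally show ?thesis using B by simp
qed

lemma MP_star: "MP_inverse s a b \<Longrightarrow> MP_inverse s (s a) (s b)"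
  unfolding MP_inverse_def
proof (elim conjE, intro conjI)
  assume h: "a * b * a = a" "b * a * b = b" "s (a * b) = a * b" "s (b * a) = b * a"
  have "s (a*b*a) = s a * s b * s a" by (simp add: mult.assoc)
  thus "s a * s b * s a = s a" using h by simp
  have "s (b*a*b) = s b * s a * s b" by (simp add: mult.assoc)
  thus "s b * s a * s b = s b" using h by simp
  show "s (s a * s b) = s a * s b" using h(4) by simp
  show "s (s b * s a) = s b * s a" using h(3) by simp
qed

lemma MP_star_iff: "MP_invertible s (s a) \<longleftrightarrow> MP_invertible s a"
  unfolding MP_invertible_def by (metis MP_star ss)

end

lemma ar: "(x::'a::ring_1)*y = r \<Longrightarrow> x*(y*t) = r*t" by (simp add: mult.assoc[symmetric])
lemma ar3: "(x::'a::ring_1)*(y*w) = r \<Longrightarrow> x*(y*(w*t)) = r*t" by (simp add: mult.assoc[symmetric])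


lemma ar4: "(x::'a::ring_1)*(y*(w*v)) = r \<Longrightarrow> x*(y*(w*(v*t))) = r*t" by (simp add: mult.assoc[symmetric])
lemma ar5: "(x::'a::ring_1)*(y*(w*(v*u))) = r \<Longrightarrow> x*(y*(w*(v*(u*t)))) = r*t" by (simp add: mult.assoc[symmetric])

lemma red1: "star_reducing s \<Longrightarrow> s x * x = 0 \<Longrightarrow> x = 0"
  unfolding star_reducing_def by blast

lemma red2: "is_involution s \<Longrightarrow> star_reducing s \<Longrightarrow> x * s x = 0 \<Longrightarrow> x = 0"
proof -
  assume a: "is_involution s" "star_reducing s" "x * s x = 0"
  have "s (s x) * s x = 0" using a ss[OF a(1)] by simp
  hence "s x = 0" using red1[OF a(2)] by blast
  hence "s (s x) = 0" using s0[OF a(1)] by simp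
  thus "x = 0" using ss[OF a(1)] by simp
qed

lemma MP_sq_r:
  assumes inv: "is_involution s" and h: "MP_inverse s a b"
  shows "MP_inverse s (a * s a) (s b * b)"
proof -
  have h1: "a*(b*a) = a" "b*(a*b) = b" "s (a*b) = a*b" "s (b*a) = b*a"
    using h unfolding MP_inverse_def by (auto simp: mult.assoc)
  have R3: "s b * s a = a*b" using h1(3) inv by simp
  have R4: "s a * s b = b*a" using h1(4) inv by simp
  have R5: "b*(a*s a) = s a"
  proof -
    have "b*(a*s a) = (b*a)*s a" by (simp add: mult.assoc)
    also have "\<dots> = (s a * s b) * s a" using R4 by simp
    also have "\<dots> = s a * (s b * s a)" by (simp add: mult.assoc)
    also have "\<dots> = s (a*(b*a))" using inv by (simp add: mult.assoc)
    finally show ?thesis using h1(1) by simp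
  qed
  have R6: "a*(b*s b) = s b"
  proof -
    have "a*(b*s b) = (s b * s a) * s b" using R3 by (simp add: mult.assoc)
    also have "\<dots> = s (b*(a*b))" using inv by (simp add: mult.assoc)
    finally show ?thesis using h1(2) by simp
  qed
  note rules = R6 R6[THEN ar3] h1(1,2) h1(1,2)[THEN ar] R3 R4 R3[THEN ar] R4[THEN ar] R5 R5[THEN ar3]
  have e1: "a * s a * (s b * b) = a * b" by (simp add: mult.assoc rules)
  have e2: "s b * b * (a * s a) = a * b" by (simp add: mult.assoc rules)
  show ?thesis unfolding MP_inverse_def
  proof (intro conjI)
    show "a * s a * (s b * b) * (a * s a) = a * s a" by (simp add: mult.assoc rules)
    show "s b * b * (a * s a) * (s b * b) = s b * b" by (simp add: mult.assoc rules)
    show "s (a * s a * (s b * b)) = a * s a * (s b * b)" using e1 h1(3) by simp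
    show "s (s b * b * (a * s a)) = s b * b * (a * s a)" using e2 h1(3) by simp
  qed
qed

lemma MP_sq_l:
  assumes inv: "is_involution s" and red: "star_reducing s" and h: "MP_inverse s (a * s a) c"
  shows "MP_inverse s (s a) (c * a)"
proof -
  define x where "x = a * s a"
  have sx: "s x = x" using inv unfolding x_def by simp
  have h1: "x*c*x = x" "c*x*c = c" "s (x*c) = x*c" "s (c*x) = c*x"
    using h unfolding MP_inverse_def x_def by auto
  have "MP_inverse s (s x) (s c)" using MP_star[OF inv] h x_def by simp
  hence "MP_inverse s x (s c)" using sx by simp
  hence sc: "s c = c" using MP_unique[OF inv, of x "s c" c] h unfolding x_def by simp
  have Q1: "a*(s a*(c*(a*(s a)))) = a*s a" using h1(1) unfolding x_def by (simp add: mult.assoc)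
  have Q2: "c*(a*(s a*c)) = c" using h1(2) unfolding x_def by (simp add: mult.assoc)
  define E where "E = s a * c * x - s a"
  have sE: "s E = x * c * a - a" unfolding E_def using inv sx sc by (simp add: mult.assoc)
  have "s E * E = x*c*a*(s a*c*x) - x*c*a*s a - a*(s a*c*x) + a * s a"
    by (simp only: sE) (simp add: E_def algebra_simps)
  also have "\<dots> = 0" unfolding x_def
    by (simp add: mult.assoc Q1 Q1[THEN ar3[of a "s a" "c*(a*s a)"], simplified mult.assoc] Q2)
  finally have "E = 0" using red1[OF red] by blast
  hence E0: "s a * c * (a * s a) = s a" unfolding E_def x_def by simp
  show ?thesis unfolding MP_inverse_def
  proof (intro conjI)
    show "s a * (c * a) * s a = s a" using E0 by (simp add: mult.assoc)
    show "c * a * s a * (c * a) = c * a" using Q2 by (simp add: mult.assoc Q2[THEN ar4])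
    show "s (s a * (c * a)) = s a * (c * a)" using inv sc by (simp add: mult.assoc)
    show "s (c * a * s a) = c * a * s a" using h1(4) unfolding x_def by (simp add: mult.assoc)
  qed
qed


lemma MP_sq:
  assumes inv: "is_involution s" and red: "star_reducing s"
  shows "MP_invertible s (a * s a) \<longleftrightarrow> MP_invertible s a"
proof
  assume "MP_invertible s (a * s a)"
  then obtain c where "MP_inverse s (a * s a) c" unfolding MP_invertible_def by blast
  hence "MP_invertible s (s a)" using MP_sq_l[OF inv red] unfolding MP_invertible_def by blast
  thus "MP_invertible s a" using MP_star_iff[OF inv] by blast
next
  assume "MP_invertible s a"
  thus "MP_invertible s (a * s a)" using MP_sq_r[OF inv] unfolding MP_invertible_def by blast
qed


lemma MP_shift:
  assumes inv: "is_involution s" and pr: "projection s p" and pz: "p * z = p" and zp: "z * p = p"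
  shows "MP_invertible s z \<longleftrightarrow> MP_invertible s (z - p)"
proof
  have pp: "p * p = p" and sp: "s p = p" using pr unfolding projection_def by auto
  assume "MP_invertible s z"
  then obtain Z where h: "z*Z*z = z" "Z*z*Z = Z" "s (z*Z) = z*Z" "s (Z*z) = Z*z"
    unfolding MP_invertible_def MP_inverse_def by blast
  have ep: "z*Z*p = p"
  proof -
    have "z*Z*p = z*Z*(z*p)" using zp by simp
    also have "\<dots> = (z*Z*z)*p" by (simp add: mult.assoc)
    finally show ?thesis using h(1) zp by simp
  qed
  have pe: "p*(z*Z) = p" using arg_cong[OF ep, of s] inv sp h(3) by (simp add: mult.assoc)
  have pZ: "p*Z = p" using pe pz by (simp add: mult.assoc[symmetric])
  have pf: "p*(Z*z) = p" using pZ pz by (simp add: mult.assoc[symmetric])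
  have fp: "Z*z*p = p" using arg_cong[OF pf, of s] inv sp h(4) by (simp add: mult.assoc)
  have Zp: "Z*p = p" using fp zp by (simp add: mult.assoc)
  have h1: "z*(Z*z) = z" "Z*(z*Z) = Z" using h by (auto simp: mult.assoc)
  note rules = pp pz zp pZ Zp h1 pp[THEN ar] pz[THEN ar] zp[THEN ar] pZ[THEN ar] Zp[THEN ar]
     h1[THEN ar3]
  have m1: "(z - p) * (Z - p) = z*Z - p" by (simp add: algebra_simps rules)
  have m2: "(Z - p) * (z - p) = Z*z - p" by (simp add: algebra_simps rules)
  have "MP_inverse s (z - p) (Z - p)" unfolding MP_inverse_def
  proof (intro conjI)
    show "(z - p) * (Z - p) * (z - p) = z - p" unfolding m1 by (simp add: algebra_simps rules)
    show "(Z - p) * (z - p) * (Z - p) = Z - p" unfolding m2 by (simp add: algebra_simps rules)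
    show "s ((z - p) * (Z - p)) = (z - p) * (Z - p)" unfolding m1 using inv sp h(3) by simp
    show "s ((Z - p) * (z - p)) = (Z - p) * (z - p)" unfolding m2 using inv sp h(4) by simp
  qed
  thus "MP_invertible s (z - p)" unfolding MP_invertible_def by blast
next
  have pp: "p * p = p" and sp: "s p = p" using pr unfolding projection_def by auto
  assume "MP_invertible s (z - p)"
  then obtain w where h: "(z-p)*w*(z-p) = z-p" "w*(z-p)*w = w" "s ((z-p)*w) = (z-p)*w" "s (w*(z-p)) = w*(z-p)"
    unfolding MP_invertible_def MP_inverse_def by blast
  define u where "u = z - p"
  have zu: "z = u + p" unfolding u_def by simp
  have up: "u*p = 0" unfolding u_def using zp pp by (simp add: algebra_simps)
  have pu: "p*u = 0" unfolding u_def using pz pp by (simp add: algebra_simps)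
  have h': "u*w*u = u" "w*u*w = w" "s (u*w) = u*w" "s (w*u) = w*u" using h unfolding u_def by auto
  have sup: "s u * p = 0" using arg_cong[OF pu, of s] inv sp by simp
  have psu: "p * s u = 0" using arg_cong[OF up, of s] inv sp by simp
  have wp: "w*p = 0"
  proof -
    have "w*p = w*(u*w)*p" using h'(2) by (simp add: mult.assoc)
    also have "\<dots> = w*(s w * s u)*p" using h'(3) inv by (metis smult)
    also have "\<dots> = w*s w*(s u * p)" by (simp add: mult.assoc)
    finally show ?thesis using sup by simp
  qed
  have pw: "p*w = 0"
  proof -
    have "p*w = p*(w*u)*w" using h'(2) by (simp add: mult.assoc)
    also have "\<dots> = p*(s u * s w)*w" using h'(4) inv by (metis smult)
    also have "\<dots> = (p * s u) * s w * w" by (simp add: mult.assoc)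
    finally show ?thesis using psu by simp
  qed
  have h1: "u*(w*u) = u" "w*(u*w) = w" using h' by (auto simp: mult.assoc)
  note rules = pp up pu wp pw h1 pp[THEN ar] up[THEN ar] pu[THEN ar] wp[THEN ar] pw[THEN ar] h1[THEN ar3]
  have m1: "(u + p) * (p + w) = u*w + p" by (simp add: algebra_simps rules)
  have m2: "(p + w) * (u + p) = w*u + p" by (simp add: algebra_simps rules)
  have "MP_inverse s z (p + w)" unfolding MP_inverse_def zu
  proof (intro conjI)
    show "(u + p) * (p + w) * (u + p) = u + p" unfolding m1 by (simp add: algebra_simps rules)
    show "(p + w) * (u + p) * (p + w) = p + w" unfolding m2 by (simp add: algebra_simps rules)
    show "s ((u + p) * (p + w)) = (u + p) * (p + w)" unfolding m1 using inv sp h'(3) by simp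
    show "s ((p + w) * (u + p)) = (p + w) * (u + p)" unfolding m2 using inv sp h'(4) by simp
  qed
  thus "MP_invertible s z" unfolding MP_invertible_def by blast
qed


lemma main_A:
  assumes inv: "is_involution s" and red: "star_reducing s"
    and prp: "projection s p" and prq: "projection s q"
    and hY: "MP_inverse s (p + q - p*q) Y"
  shows "MP_invertible s ((1 - p) * q * (1 - p))"
proof -
  have pp: "p * p = p" and sp: "s p = p" using prp unfolding projection_def by auto
  have qq: "q * q = q" and sq: "s q = q" using prq unfolding projection_def by auto
  define y where "y = p + q - p*q"
  have h: "y*Y*y = y" "Y*y*Y = Y" "s (y*Y) = y*Y" "s (Y*y) = Y*y"
    using hY unfolding MP_inverse_def y_def by auto
  have h1: "y*(Y*y) = y" "Y*(y*Y) = Y" using h by (auto simp: mult.assoc)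
  have yq: "y*q = q" unfolding y_def by (simp add: algebra_simps qq)
  have py: "p*y = p" unfolding y_def by (simp add: algebra_simps pp pp[THEN ar])
  define E where "E = 1 - y*Y"
  have Eq: "E*q = 0"
  proof -
    have "y*Y*q = y*Y*(y*q)" using yq by simp
    also have "\<dots> = (y*Y*y)*q" by (simp add: mult.assoc)
    finally have "y*Y*q = q" using h(1) yq by simp
    thus ?thesis unfolding E_def by (simp add: algebra_simps)
  qed
  have Ey: "E*y = 0" unfolding E_def using h1 by (simp add: algebra_simps)
  hence "E*p + E*q - E*(p*q) = 0" unfolding y_def by (simp add: algebra_simps)
  hence Epq: "E*(p*q) = E*p" using Eq by simp
  define X where "X = E*(q - p*q)"
  have XE: "X = - (E*p)" unfolding X_def using Eq Epq by (simp add: algebra_simps)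
  have sE: "s E = E" unfolding E_def using inv h(3) by simp
  have sX: "s X = (q - q*p) * E" unfolding X_def using inv sE sp sq by simp
  have qq': "(q - p*q)*(q - q*p) = (q - p*q)*(1 - p)"
    by (simp add: algebra_simps qq qq[THEN ar])
  have "X * s X = E*((q - p*q)*(q - q*p))*E" by (simp only: sX) (simp add: X_def mult.assoc)
  also have "\<dots> = X*(1-p)*E" unfolding qq' X_def by (simp add: mult.assoc)
  also have "\<dots> = 0" unfolding XE by (simp add: algebra_simps pp)
  finally have "X = 0" using red2[OF inv red] by blast
  hence "E*p = 0" using XE by simp
  hence ep: "y*(Y*p) = p" unfolding E_def by (simp add: algebra_simps)
  have pe: "p*(y*Y) = p" using arg_cong[OF ep, of s] inv sp h(3) by (simp add: mult.assoc)
  have pY: "p*Y = p" using pe py by (simp add: mult.assoc[symmetric])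
  have pf: "p*(Y*y) = p" using pY py by (simp add: mult.assoc[symmetric])
  have fp: "Y*(y*p) = p" using arg_cong[OF pf, of s] inv sp h(4) by (simp add: mult.assoc)
  define u where "u = y - y*p"
  define w where "w = Y - Y*p"
  have uq: "(1 - p) * q * (1 - p) = u" unfolding u_def y_def
    by (simp add: algebra_simps pp pp[THEN ar])
  note rules = pp py pY ep fp h1 pp[THEN ar] py[THEN ar] pY[THEN ar] ep[THEN ar3] fp[THEN ar3]
     h1[THEN ar3]
  have m1: "u * w = y*Y - p" unfolding u_def w_def by (simp add: algebra_simps rules)
  have m2: "w * u = Y*y - p" unfolding u_def w_def by (simp add: algebra_simps rules)
  have "MP_inverse s u w" unfolding MP_inverse_def
  proof (intro conjI)
    show "u * w * u = u" by (simp only: m1) (simp add: u_def algebra_simps rules)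
    show "w * u * w = w" by (simp only: m2) (simp add: w_def algebra_simps rules)
    show "s (u * w) = u * w" unfolding m1 using inv sp h(3) by simp
    show "s (w * u) = w * u" unfolding m2 using inv sp h(4) by simp
  qed
  thus ?thesis unfolding uq MP_invertible_def by blast
qed


lemma main_B:
  assumes inv: "is_involution s" and red: "star_reducing s"
    and prp: "projection s p" and prq: "projection s q"
    and hw: "MP_inverse s ((1 - p) * q * (1 - p)) w"
  shows "MP_invertible s (p + q - p * q)"
proof -
  have pp: "p * p = p" and sp: "s p = p" using prp unfolding projection_def by auto
  have qq: "q * q = q" and sq: "s q = q" using prq unfolding projection_def by auto
  define u where "u = (1 - p) * q * (1 - p)"
  define g where "g = (1 - p) * q * p"
  have h: "u*w*u = u" "w*u*w = w" "s (u*w) = u*w" "s (w*u) = w*u"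
    using hw unfolding MP_inverse_def u_def by auto
  have h1: "u*(w*u) = u" "w*(u*w) = w" using h by (auto simp: mult.assoc)
  note pr = pp pp[THEN ar] qq qq[THEN ar]
  have pg: "p*g = 0" unfolding g_def by (simp add: algebra_simps pr)
  have gp: "g*p = g" unfolding g_def by (simp add: algebra_simps pr)
  have gg: "g*g = 0" unfolding g_def by (simp add: algebra_simps pr)
  have pu: "p*u = 0" unfolding u_def by (simp add: algebra_simps pr)
  have up: "u*p = 0" unfolding u_def by (simp add: algebra_simps pr)
  have gu: "g*u = 0" unfolding g_def u_def by (simp add: algebra_simps pr)
  have sg: "s g = p * q * (1 - p)" unfolding g_def using inv sp sq by (simp add: mult.assoc)
  have ggs: "g * s g = u - u*u" by (simp only: sg) (simp add: g_def u_def algebra_simps pr)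
  have y: "p + q - p*q = p + g + u" unfolding g_def u_def by (simp add: algebra_simps pr)
  have sup: "s u * p = 0" using arg_cong[OF pu, of s] inv sp by simp
  have psu: "p * s u = 0" using arg_cong[OF up, of s] inv sp by simp
  have wp: "w*p = 0"
  proof -
    have "w*p = w*(u*w)*p" using h1(2) by simp
    also have "\<dots> = w*(s w * s u)*p" using h(3) inv by (metis smult)
    also have "\<dots> = w*s w*(s u * p)" by (simp add: mult.assoc)
    finally show ?thesis using sup by simp
  qed
  have pw: "p*w = 0"
  proof -
    have "p*w = p*(w*u)*w" using h1(2) by (simp add: mult.assoc)
    also have "\<dots> = p*(s u * s w)*w" using h(4) inv by (metis smult)
    also have "\<dots> = (p * s u) * s w * w" by (simp add: mult.assoc)
    finally show ?thesis using psu by simp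
  qed
  have gw: "g*w = 0"
  proof -
    have "g*w = g*(p*w)" using gp by (metis mult.assoc)
    thus ?thesis using pw by simp
  qed
  define X where "X = (1 - u*w)*g"
  have sX: "s X = s g * (1 - u*w)" unfolding X_def using inv h(3) by simp
  have "X * s X = (1 - u*w)*(g * s g)*(1 - u*w)"
    by (simp only: sX) (simp add: X_def mult.assoc)
  also have "\<dots> = 0" unfolding ggs by (simp add: algebra_simps h1 h1[THEN ar3])
  finally have "X = 0" using red2[OF inv red] by blast
  hence uwg: "u*(w*g) = g" unfolding X_def by (simp add: algebra_simps)
  define Y where "Y = p - w*g + w"
  note rules = pp pg gp gg pu up gu pw wp gw uwg h1
    pp[THEN ar] pg[THEN ar] gp[THEN ar] gg[THEN ar] pu[THEN ar] up[THEN ar] gu[THEN ar]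
    pw[THEN ar] wp[THEN ar] gw[THEN ar] uwg[THEN ar3] h1[THEN ar3]
  have m1: "(p + g + u) * Y = p + u*w" unfolding Y_def by (simp add: algebra_simps rules)
  have m2: "Y * (p + g + u) = p + w*u" unfolding Y_def by (simp add: algebra_simps rules)
  have "MP_inverse s (p + g + u) Y" unfolding MP_inverse_def
  proof (intro conjI)
    show "(p + g + u) * Y * (p + g + u) = p + g + u" by (simp only: m1) (simp add: algebra_simps rules)
    show "Y * (p + g + u) * Y = Y" by (simp only: m2) (simp add: Y_def algebra_simps rules)
    show "s ((p + g + u) * Y) = (p + g + u) * Y" unfolding m1 using inv sp h(3) by simp
    show "s (Y * (p + g + u)) = Y * (p + g + u)" unfolding m2 using inv sp h(4) by simp
  qed
  thus ?thesis unfolding y MP_invertible_def by blast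
qed


lemma chain:
  assumes inv: "is_involution s" and red: "star_reducing s"
    and prp: "projection s p" and prq: "projection s q"
  shows "MP_invertible s (p + q - p * q) \<longleftrightarrow> MP_invertible s ((1 - p) * q * (1 - p))"
    and "MP_invertible s (p + (1 - p) * q * (1 - p)) \<longleftrightarrow> MP_invertible s ((1 - p) * q * (1 - p))"
    and "MP_invertible s (q - p * q) \<longleftrightarrow> MP_invertible s ((1 - p) * q * (1 - p))"
    and "MP_invertible s (q - q * p) \<longleftrightarrow> MP_invertible s ((1 - p) * q * (1 - p))"
proof -
  have pp: "p * p = p" and sp: "s p = p" using prp unfolding projection_def by auto
  have qq: "q * q = q" and sq: "s q = q" using prq unfolding projection_def by auto
  note pr = pp pp[THEN ar] qq qq[THEN ar]
  show "MP_invertible s (p + q - p * q) \<longleftrightarrow> MP_invertible s ((1 - p) * q * (1 - p))"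
    using main_A[OF inv red prp prq] main_B[OF inv red prp prq] unfolding MP_invertible_def by blast
  have "MP_invertible s (p + (1 - p) * q * (1 - p)) \<longleftrightarrow> MP_invertible s (p + (1 - p) * q * (1 - p) - p)"
    by (rule MP_shift[OF inv prp]) (simp_all add: algebra_simps pr)
  thus "MP_invertible s (p + (1 - p) * q * (1 - p)) \<longleftrightarrow> MP_invertible s ((1 - p) * q * (1 - p))" by simp
  have e: "(q - p * q) * s (q - p * q) = (1 - p) * q * (1 - p)"
    using inv sp sq by (simp add: algebra_simps pr)
  show 3: "MP_invertible s (q - p * q) \<longleftrightarrow> MP_invertible s ((1 - p) * q * (1 - p))"
    using MP_sq[OF inv red, of "q - p*q"] unfolding e by simp
  have "s (q - p * q) = q - q * p" using inv sp sq by simp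
  thus "MP_invertible s (q - q * p) \<longleftrightarrow> MP_invertible s ((1 - p) * q * (1 - p))"
    using MP_star_iff[OF inv, of "q - p*q"] 3 by simp
qed

theorem corollary2p6:
  fixes s :: "'a::ring_1 \<Rightarrow> 'a" and p q :: 'a
  assumes "is_involution s" and "star_reducing s"
    and "projection s p" and "projection s q"
  shows "(MP_invertible s (p + q - p * q) \<longleftrightarrow> MP_invertible s (p + (1 - p) * q * (1 - p)))
       \<and> (MP_invertible s (p + q - p * q) \<longleftrightarrow> MP_invertible s ((1 - p) * q * (1 - p)))
       \<and> (MP_invertible s (p + q - p * q) \<longleftrightarrow> MP_invertible s (q - p * q))
       \<and> (MP_invertible s (p + q - p * q) \<longleftrightarrow> MP_invertible s (q - q * p))
       \<and> (MP_invertible s (p + q - p * q) \<longleftrightarrow> MP_invertible s (p + q - q * p))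
       \<and> (MP_invertible s (p + q - p * q) \<longleftrightarrow> MP_invertible s (q + (1 - q) * p * (1 - q)))
       \<and> (MP_invertible s (p + q - p * q) \<longleftrightarrow> MP_invertible s ((1 - q) * p * (1 - q)))
       \<and> (MP_invertible s (p + q - p * q) \<longleftrightarrow> MP_invertible s (p - q * p))
       \<and> (MP_invertible s (p + q - p * q) \<longleftrightarrow> MP_invertible s (p - p * q))"
proof -
  note A = chain[OF assms(1,2,3,4)]
  note B = chain[OF assms(1,2,4,3)]
  have sp: "s p = p" and sq: "s q = q" using assms(3,4) unfolding projection_def by auto
  have st: "s (p + q - p * q) = p + q - q * p" using assms(1) sp sq by simp
  have S: "MP_invertible s (p + q - q * p) \<longleftrightarrow> MP_invertible s (p + q - p * q)"
    using MP_star_iff[OF assms(1), of "p + q - p * q"] unfolding st .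
  have qp: "q + p - q * p = p + q - q * p" by (simp add: algebra_simps)
  show ?thesis using A B S qp by metis
qed

end
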